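(* Let $a, b, n$ be positive integers with $b>1$, $n>1$ and $\gcd(r_b(n),a)=1$. Then the set of pseudo-Frobenius numbers of $S_a(b,n)$ is \[\operatorname{PF}(S_a(b,n)) = \{(n-i+1)\,(b^n - 1 - a) + a\, r_b(n) \mid i = 2,\ldots,n\},\] and consequently the type of $S_a(b,n)$ equals $n-1$.
   Context: For $\ell \ge 1$, $r_b(\ell) = \sum_{j=0}^{\ell-1} b^j$, and $r_b(0)=0$. For $i \ge 1$, $a_i := r_b(n) + a\, r_b(i-1)$; $S_a(b,n)$ is the numerical semigroup generated by $\{a_i\}$. An integer $x$ is a pseudo-Frobenius number of a numerical semigroup $S$ if $x \notin S$ and $x + s \in S$ for all $s \in S\setminus\{0\}$; $\operatorname{PF}(S)$ is the set of these, and the type $\operatorname{t}(S)$ is its cardinality. *)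

theory Defs
  imports Main
begin

definition rb :: "nat \<Rightarrow> nat \<Rightarrow> nat" where
  "rb b l = (\<Sum>j<l. b ^ j)"

definition gen_a :: "nat \<Rightarrow> nat \<Rightarrow> nat \<Rightarrow> nat \<Rightarrow> nat" where
  "gen_a a b n i = rb b n + a * rb b (i - 1)"

inductive_set semigroup_gen :: "int set \<Rightarrow> int set" for G :: "int set" where
  zero: "0 \<in> semigroup_gen G"
| add: "g \<in> G \<Longrightarrow> s \<in> semigroup_gen G \<Longrightarrow> g + s \<in> semigroup_gen G"

definition S_sg :: "nat \<Rightarrow> nat \<Rightarrow> nat \<Rightarrow> int set" where
  "S_sg a b n = semigroup_gen {int (gen_a a b n i) | i. i \<ge> 1}"

definition PF :: "int set \<Rightarrow> int set" where
  "PF S = {x. x \<notin> S \<and> (\<forall>s \<in> S - {0}. x + s \<in> S)}"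

definition sg_type :: "int set \<Rightarrow> nat" where
  "sg_type S = card (PF S)"

end

theory Submission
  imports Defs
begin


lemma rb_0[simp]: "rb b 0 = 0" by (simp add: rb_def)
lemma rb_Suc2: "rb b (Suc e) = rb b e + b ^ e" by (simp add: rb_def)
lemma rb_Suc: "rb b (Suc e) = b * rb b e + 1"
  unfolding rb_def by (subst sum.lessThan_Suc_shift) (simp add: sum_distrib_left)
lemma rb_mult: "b \<ge> 1 \<Longrightarrow> (b - 1) * rb b e + 1 = b ^ e"
proof (induction e)
  case 0 then show ?case by simp
next
  case (Suc e)
  obtain c where c: "b = Suc c" using Suc.prems by (cases b) auto
  have "(b - 1) * rb b (Suc e) + 1 = ((b - 1) * rb b e + 1) + (b-1) * b^e"
    by (simp add: rb_Suc2 algebra_simps)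
  also have "\<dots> = b^e + c * b^e" using Suc by (simp add: c)
  finally show ?case by (simp add: c)
qed
lemma rb_ge: "b \<ge> 1 \<Longrightarrow> rb b e \<ge> e"
proof (induction e)
  case (Suc e)
  have "b ^ e \<ge> 1" using Suc.prems by simp
  then have "Suc e \<le> rb b e + b^e" using Suc by linarith
  then show ?case by (simp add: rb_Suc2)
qed simp

function ds :: "nat \<Rightarrow> nat \<Rightarrow> nat" where
  "ds b x = (if b < 2 \<or> x = 0 then 0 else x mod b + ds b (x div b))"
  by pat_completeness auto
termination by (relation "measure (\<lambda>(b,x). x)") auto

declare ds.simps[simp del]

lemma ds_0[simp]: "ds b 0 = 0" by (simp add: ds.simps)
lemma ds_eq: "b \<ge> 2 \<Longrightarrow> ds b x = x mod b + ds b (x div b)"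
  by (cases "x = 0") (auto simp: ds.simps[of b x])

lemma ds_small: "b \<ge> 2 \<Longrightarrow> x < b \<Longrightarrow> ds b x = x"
  using ds_eq[of b x] by simp

lemma ds_le: "b \<ge> 2 \<Longrightarrow> ds b x \<le> x"
proof (induction x rule: less_induct)
  case (less x)
  show ?case
  proof (cases "x = 0")
    case True then show ?thesis by simp
  next
    case False
    have "x div b < x" using False less.prems by simp
    then have "ds b (x div b) \<le> x div b" using less by auto
    moreover have "x div b \<le> x div b * b" using less.prems by simp
    moreover have "x mod b + x div b \<le> x"
      using calculation(2) div_mult_mod_eq[of x b] by linarith
    ultimately show ?thesis using ds_eq[OF less.prems, of x] by linarith
  qed
qed

lemma ds_pos: "b \<ge> 2 \<Longrightarrow> x > 0 \<Longrightarrow> ds b x > 0"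
proof (induction x rule: less_induct)
  case (less x)
  show ?case
  proof (cases "x mod b = 0")
    case True
    then have "x div b > 0" "x div b < x" using less.prems
      by (auto simp: div_greater_zero_iff)
    then show ?thesis using less ds_eq[of b x] by auto
  next
    case False then show ?thesis using ds_eq[of b x] less.prems by auto
  qed
qed



lemma ds_shift: "b \<ge> 2 \<Longrightarrow> s < b ^ k \<Longrightarrow> ds b (q * b ^ k + s) = ds b q + ds b s"
proof (induction k arbitrary: s)
  case 0 then show ?case by simp
next
  case (Suc k)
  have bpos: "b > 0" using Suc.prems by simp
  have m: "(q * b ^ Suc k + s) mod b = s mod b"
    by (simp add: mult.assoc[symmetric] mod_add_left_eq[symmetric] mult.commute[of _ b])
  have d: "(q * b ^ Suc k + s) div b = q * b ^ k + s div b"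
    using bpos by (simp add: mult.commute[of _ b] mult.left_commute[of _ b] div_mult_self2 add.commute)
  have sd: "s div b < b ^ k" using Suc.prems
    by (simp add: div_less_iff_less_mult mult.commute)
  have "ds b (q * b ^ Suc k + s) = s mod b + ds b (q * b ^ k + s div b)"
    using ds_eq[OF Suc.prems(1), of "q * b ^ Suc k + s"] m d by simp
  also have "\<dots> = s mod b + ds b q + ds b (s div b)" using Suc.IH[OF Suc.prems(1) sd] by simp
  also have "\<dots> = ds b q + ds b s" using ds_eq[OF Suc.prems(1), of s] by simp
  finally show ?case .
qed

lemma ds_add: "b \<ge> 2 \<Longrightarrow> ds b (x + y) \<le> ds b x + ds b y"
proof (induction "x + y" arbitrary: x y rule: less_induct)
  case less
  have b: "b \<ge> 2" by (rule less.prems)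
  show ?case
  proof (cases "x + y = 0")
    case True then show ?thesis by simp
  next
    case pos: False
    define xd where "xd = x div b"
    define xm where "xm = x mod b"
    define yd where "yd = y div b"
    define ym where "ym = y mod b"
    define D where "D = xd + yd"
    have x: "x = xd * b ^ 1 + xm" unfolding xd_def xm_def by simp
    have y: "y = yd * b ^ 1 + ym" unfolding yd_def ym_def by simp
    have xm: "xm < b" "xm < b ^ 1" unfolding xm_def using b by auto
    have ym: "ym < b" "ym < b ^ 1" unfolding ym_def using b by auto
    have dx: "ds b x = ds b xd + xm"
      using ds_shift[OF b xm(2), of xd] ds_small[OF b xm(1)] x by simp
    have dy: "ds b y = ds b yd + ym"
      using ds_shift[OF b ym(2), of yd] ds_small[OF b ym(1)] y by simp
    have Db: "D * b \<le> x + y" using x y unfolding D_def by (simp add: algebra_simps)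
    have Dlt: "D < x + y"
    proof (cases "D = 0")
      case True then show ?thesis using pos by simp
    next
      case False
      then have "D < D * b" using b by simp
      then show ?thesis using Db by linarith
    qed
    have IHD: "ds b D \<le> ds b xd + ds b yd" using less(1)[OF _ b, of xd yd] Dlt unfolding D_def by simp
    show ?thesis
    proof (cases "xm + ym < b")
      case True
      have s: "x + y = D * b ^ 1 + (xm + ym)" using x y unfolding D_def by (simp add: algebra_simps)
      have "ds b (x + y) = ds b D + ds b (xm + ym)"
        unfolding s by (rule ds_shift) (use b True in auto)
      also have "ds b (xm + ym) = xm + ym" using ds_small[OF b True] .
      finally show ?thesis using IHD dx dy by linarith
    next
      case False
      define E where "E = xm + ym - b"
      have E: "E < b ^ 1" unfolding E_def using xm ym by auto
      have s: "x + y = (D + 1) * b ^ 1 + E" using x y False unfolding D_def E_def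
        by (simp add: algebra_simps)
      have D1b: "(D + 1) * b \<le> x + y" using s by simp
      have "(D + 1) * 2 \<le> (D + 1) * b" using b by (rule mult_le_mono2)
      moreover have "(D + 1) * 2 = D + D + 2" by simp
      ultimately have "D + 1 < (D + 1) * b" by linarith
      then have D1lt: "D + 1 < x + y" using D1b by linarith
      have "ds b (x + y) = ds b (D + 1) + ds b E"
        unfolding s by (rule ds_shift) (use b E in auto)
      also have "ds b E = E" using ds_small[OF b] E by simp
      finally have h1: "ds b (x + y) = ds b (D + 1) + E" .
      have "ds b (D + 1) \<le> ds b D + ds b 1" using less(1)[OF _ b, of D 1] D1lt by simp
      moreover have "ds b 1 = 1" using ds_small[OF b, of 1] b by simp
      ultimately have "ds b (D + 1) \<le> ds b D + 1" by simp
      then show ?thesis using h1 IHD dx dy b False unfolding E_def by linarith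
    qed
  qed
qed

lemma ds_pow: "b \<ge> 2 \<Longrightarrow> ds b (b ^ e) = 1"
  using ds_shift[of b 0 e 1] by (simp add: ds_small)

lemma ds_mulb: "b \<ge> 2 \<Longrightarrow> ds b (q * b) = ds b q"
  using ds_shift[of b 0 1 q] by simp

lemma ds_pm1: "b \<ge> 2 \<Longrightarrow> ds b (b ^ n - 1) = n * (b - 1)"
proof (induction n)
  case 0 then show ?case by simp
next
  case (Suc n)
  obtain m where m: "b ^ n = Suc m" using Suc.prems
    by (metis not0_implies_Suc not_numeral_le_zero power_eq_0_iff)
  have e: "b ^ Suc n - 1 = (b ^ n - 1) * b ^ 1 + (b - 1)"
    using Suc.prems m by (cases b) (auto simp: algebra_simps)
  have "ds b (b ^ Suc n - 1) = ds b (b ^ n - 1) + ds b (b - 1)"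
    unfolding e using Suc.prems by (intro ds_shift) auto
  also have "\<dots> = n * (b - 1) + (b - 1)" using Suc by (simp add: ds_small)
  finally show ?case by simp
qed

lemma ds_pred: "b \<ge> 2 \<Longrightarrow> P mod b \<noteq> 0 \<Longrightarrow> ds b P = ds b (P - 1) + 1"
proof -
  assume b: "b \<ge> 2" and nz: "P mod b \<noteq> 0"
  have P: "P = (P div b) * b ^ 1 + P mod b" by simp
  have P1: "P - 1 = (P div b) * b ^ 1 + (P mod b - 1)" using nz
    by (metis P Nat.add_diff_assoc One_nat_def Suc_leI neq0_conv)
  have "ds b P = ds b (P div b) + ds b (P mod b)"
    by (subst P, rule ds_shift) (use b in auto)
  moreover have pm: "P mod b < b" using b by simp
  moreover have pm2: "P mod b - 1 < b" using pm by linarith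
  moreover have "ds b (P - 1) = ds b (P div b) + ds b (P mod b - 1)"
    by (subst P1, rule ds_shift) (use b pm2 in auto)
  moreover have "ds b (P mod b) = P mod b" "ds b (P mod b - 1) = P mod b - 1"
    using b pm pm2 by (auto intro!: ds_small)
  ultimately show ?thesis using nz by simp
qed

lemma ds_multiple:
  assumes b: "b \<ge> 2" and n: "n \<ge> 1"
  shows "X > 0 \<Longrightarrow> (b ^ n - 1) dvd X \<Longrightarrow> ds b X \<ge> n * (b - 1)"
proof (induction X rule: less_induct)
  case (less X)
  define N where "N = b ^ n"
  have N2: "N \<ge> 2" unfolding N_def using b n
    by (metis dual_order.trans le_refl not_one_le_zero one_le_numeral power_increasing power_one_right)
  show ?case
  proof (cases "X < N")
    case True
    obtain k where k: "X = (N - 1) * k" using less.prems unfolding N_def by auto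
    have "k \<noteq> 0" using k less.prems by auto
    moreover have "k < 2"
    proof (rule ccontr)
      assume "\<not> k < 2"
      then have "(N - 1) * 2 \<le> (N - 1) * k" by simp
      then show False using True k N2 by linarith
    qed
    ultimately have "X = N - 1" using k by (cases k) auto
    then show ?thesis using ds_pm1[OF b] unfolding N_def by simp
  next
    case False
    define q where "q = X div N"
    define s where "s = X mod N"
    have X: "X = q * N + s" unfolding q_def s_def by simp
    have q1: "q \<ge> 1" unfolding q_def using False N2
      by (simp add: div_greater_zero_iff Suc_le_eq)
    have sN: "s < N" unfolding s_def using N2 by simp
    have "q < q * N" using q1 N2 by simp
    then have lt: "q + s < X" using X by linarith
    have "q * (N - 1) = q * N - q" by (simp add: diff_mult_distrib2)
    then have X2: "X = (q + s) + q * (N - 1)" using X \<open>q < q * N\<close> by linarith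
    have dv: "(b ^ n - 1) dvd (q + s)"
    proof -
      have "(b ^ n - 1) dvd X - q * (N - 1)" using less.prems(2) unfolding N_def
        by (intro dvd_diff_nat) auto
      then show ?thesis using X2 by simp
    qed
    have "ds b (q + s) \<ge> n * (b - 1)" using less.IH[OF lt] dv q1 by simp
    moreover have "ds b X = ds b q + ds b s" unfolding X N_def using sN b
      by (intro ds_shift) (auto simp: N_def)
    moreover have "ds b (q + s) \<le> ds b q + ds b s" using ds_add[OF b] .
    ultimately show ?thesis by linarith
  qed
qed



inductive Rp :: "nat \<Rightarrow> nat \<Rightarrow> nat \<Rightarrow> bool" for b where
  Rp0: "Rp b 0 0"
| RpS: "Rp b C T \<Longrightarrow> Rp b (Suc C) (T + rb b e)"

lemma Rp_add: assumes A: "Rp b C T" shows "Rp b C' T' \<Longrightarrow> Rp b (C + C') (T + T')"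
proof (induction rule: Rp.induct)
  case Rp0 then show ?case using A by simp
next
  case (RpS C1 T1 e)
  have "Rp b (Suc (C + C1)) (T + T1 + rb b e)" using RpS by (intro Rp.RpS) auto
  then show ?case by (simp add: add.assoc)
qed

lemma Rp_rep: "Rp b c (c * rb b e)"
proof (induction c)
  case 0 then show ?case by (simp add: Rp0)
next
  case (Suc c)
  then have "Rp b (Suc c) (c * rb b e + rb b e)" by (rule RpS)
  then show ?case by (simp add: add.commute)
qed

lemma Rp_sum: "finite A \<Longrightarrow> Rp b (\<Sum>k\<in>A. f k) (\<Sum>k\<in>A. f k * rb b k)"
proof (induction A rule: finite_induct)
  case empty then show ?case by (simp add: Rp0)
next
  case (insert x F)
  then show ?case using Rp_add[OF Rp_rep[of b "f x" x] insert.IH] by simp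
qed

lemma Rp_shift: "Rp b C T \<Longrightarrow> Rp b C (C + b * T)"
proof (induction rule: Rp.induct)
  case Rp0 then show ?case by (simp add: Rp.Rp0)
next
  case (RpS C T e)
  have "Rp b (Suc C) (C + b * T + rb b (Suc e))" using RpS.IH by (rule Rp.RpS)
  then show ?case by (simp add: rb_Suc algebra_simps)
qed

lemma Rp_ds: assumes bb: "b \<ge> 2" shows "Rp b C T \<Longrightarrow> ds b (C + (b - 1) * T) \<le> C"
proof (induction rule: Rp.induct)
  case Rp0 then show ?case by simp
next
  case (RpS C T e)
  have e: "Suc C + (b - 1) * (T + rb b e) = (C + (b - 1) * T) + b ^ e"
  proof -
    have "(b - 1) * (T + rb b e) = (b - 1) * T + (b - 1) * rb b e" by (simp add: distrib_left)
    then show ?thesis using rb_mult[of b e] bb by linarith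
  qed
  have "ds b ((C + (b - 1) * T) + b ^ e) \<le> ds b (C + (b - 1) * T) + ds b (b ^ e)"
    using ds_add bb by blast
  then show ?case unfolding e using RpS ds_pow[OF bb, of e] by simp
qed

lemma hA: "(X::nat) \<le> Y \<Longrightarrow> C + Y = P \<Longrightarrow> P = Q \<Longrightarrow> X + P0 = Q \<Longrightarrow> \<not> C \<le> P0 \<Longrightarrow> False"
  by linarith
lemma hB: "(Y::nat) \<le> Z \<Longrightarrow> Z + c = X \<Longrightarrow> C + Y = P \<Longrightarrow> P = Q \<Longrightarrow> X + P0 = Q \<Longrightarrow> C \<ge> P0 + c"
  by linarith
lemma hC: "(Y::nat) < X \<Longrightarrow> C + Y = P \<Longrightarrow> P = Q \<Longrightarrow> X + P0 = Q \<Longrightarrow> C \<le> P0 \<Longrightarrow> False"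
  by linarith
lemma hD: "(X::nat) + Y = Z \<Longrightarrow> C + Z = P \<Longrightarrow> P = Q \<Longrightarrow> Y + P0 = Q \<Longrightarrow> C + X = P0"
  by linarith

lemma helper_calc:
  fixes P P0 b T0 T C :: nat
  assumes "P = P0 * b" "b * T0 + b * P0 = b * T" "(b - 1) * T + T = b * T" "C + (b - 1) * T = P"
  shows "C + b * T0 = T"
proof -
  have P': "P = b * P0" using assms(1) by (metis mult.commute)
  have "C + b * T0 + P = C + (b * T0 + b * P0)" using P' by (simp only: add.assoc)
  also have "\<dots> = C + b * T" using assms(2) by (simp only:)
  also have "\<dots> = (C + (b - 1) * T) + T" using assms(3) by (simp only: add.assoc)
  also have "\<dots> = T + P" using assms(4) by (simp only: add.commute)
  finally show ?thesis by simp
qed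

lemma ds_Rp_aux:
  assumes b: "b \<ge> 2"
  shows "\<forall>C T. C + (b - 1) * T = P \<longrightarrow> ds b P \<le> C \<longrightarrow> Rp b C T"
proof (induction P rule: less_induct)
  case (less P)
  show ?case
  proof (intro allI impI)
    fix C T assume eq: "C + (b - 1) * T = P" and le: "ds b P \<le> C"
    show "Rp b C T"
    proof (cases "P = 0")
      case True
      then have "C = 0" "T = 0" using eq b by auto
      then show ?thesis by (simp add: Rp0)
    next
      case False
      then have "ds b P > 0" using ds_pos b by blast
      then obtain C' where C': "C = Suc C'" using le by (cases C) auto
      show ?thesis
      proof (cases "ds b (P - 1) \<le> C'")
        case True
        have "Rp b C' T" using less.IH[of "P - 1"] False eq C' True by auto
        then have "Rp b (Suc C') (T + rb b 0)" by (rule RpS)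
        then show ?thesis using C' by simp
      next
        case nle: False
        have pm: "P mod b = 0"
        proof (rule ccontr)
          assume "P mod b \<noteq> 0"
          then have "ds b P = ds b (P - 1) + 1" using ds_pred b by blast
          then show False using nle le C' by simp
        qed
        define P0 where "P0 = P div b"
        have P: "P = P0 * b" unfolding P0_def using pm div_mult_mod_eq[of P b] by simp
        have P0pos: "P0 > 0" using P False by auto
        have P0lt: "P0 < P" using P P0pos b by simp
        have dsP0: "ds b P0 = ds b P" using P ds_mulb b by simp
        have f1: "(b - 1) * P0 + P0 = P0 * b" using b by (simp add: algebra_simps)
        have f2: "(b - 1) * T + T = b * T" using b by (simp add: algebra_simps)
        have CP0: "C \<le> P0"
        proof (rule ccontr)
          assume cg: "\<not> C \<le> P0"
          have TP: "T < P0"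
          proof (rule ccontr)
            assume "\<not> T < P0"
            then have "(b - 1) * P0 \<le> (b - 1) * T" by simp
            then show False using hA[OF _ eq P f1 cg] by blast
          qed
          then have "T \<le> P0 - 1" by linarith
          then have "(b - 1) * T \<le> (b - 1) * (P0 - 1)" by (rule mult_le_mono2)
          moreover have "(b - 1) * (P0 - 1) + (b - 1) = (b - 1) * P0"
          proof -
            have "(b - 1) * Suc (P0 - 1) = (b - 1) * (P0 - 1) + (b - 1)" by simp
            then show ?thesis using P0pos by simp
          qed
          ultimately have Cge: "C \<ge> P0 + (b - 1)" using hB[OF _ _ eq P f1] by blast
          have Pm1: "P - 1 = (P0 - 1) * b ^ 1 + (b - 1)"
          proof -
            obtain m where m: "P0 = Suc m" using P0pos by (cases P0) auto
            have "P = m * b + b" using P m by simp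
            then show ?thesis using m b by simp
          qed
          have h: "ds b ((P0 - 1) * b ^ 1 + (b - 1)) = ds b (P0 - 1) + ds b (b - 1)"
            by (rule ds_shift) (use b in auto)
          have "ds b (P - 1) = ds b (P0 - 1) + ds b (b - 1)"
            unfolding Pm1 by (rule h)
          also have "\<dots> \<le> (P0 - 1) + (b - 1)"
          proof -
            have "ds b (P0 - 1) \<le> P0 - 1" by (rule ds_le[OF b])
            moreover have "ds b (b - 1) = b - 1" using b by (intro ds_small) auto
            ultimately show ?thesis by linarith
          qed
          finally show False using nle Cge C' P0pos by linarith
        qed
        have TP0: "P0 \<le> T"
        proof (rule ccontr)
          assume "\<not> P0 \<le> T"
          then have "(b - 1) * T \<le> (b - 1) * P0" by simp
          moreover have "(b-1) * T < (b - 1) * P0" using \<open>\<not> P0 \<le> T\<close> b by simp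
          ultimately show False using hC[OF _ eq P f1 CP0] by blast
        qed
        define T0 where "T0 = T - P0"
        have g1: "(b - 1) * T0 + (b - 1) * P0 = (b - 1) * T"
          unfolding T0_def using TP0 by (simp add: diff_mult_distrib2)
        have g2: "b * T0 + b * P0 = b * T"
          unfolding T0_def using TP0 by (simp add: diff_mult_distrib2)
        have eq0: "C + (b - 1) * T0 = P0" by (rule hD[OF g1 eq P f1])
        have "Rp b C T0" using less.IH[OF P0lt] eq0 le dsP0 by auto
        then have "Rp b C (C + b * T0)" by (rule Rp_shift)
        moreover have "C + b * T0 = T" using P g2 f2 eq by (rule helper_calc)
        ultimately show ?thesis by simp
      qed
    qed
  qed
qed

lemma ds_Rp: "b \<ge> 2 \<Longrightarrow> ds b (C + (b - 1) * T) \<le> C \<Longrightarrow> Rp b C T"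
  using ds_Rp_aux by blast



lemma S_Rp: "x \<in> S_sg a b n \<Longrightarrow> \<exists>C T. Rp b C T \<and> x = int (C * rb b n + a * T)"
  unfolding S_sg_def
proof (induction rule: semigroup_gen.induct)
  case zero
  show ?case by (rule exI[of _ 0], rule exI[of _ 0]) (simp add: Rp0)
next
  case (add g s)
  obtain i where i: "g = int (gen_a a b n i)" "i \<ge> 1" using add.hyps(1) by blast
  obtain C T where CT: "Rp b C T" "s = int (C * rb b n + a * T)" using add.IH by blast
  have "Rp b (Suc C) (T + rb b (i - 1))" using CT(1) by (rule RpS)
  moreover have "g + s = int (Suc C * rb b n + a * (T + rb b (i - 1)))"
    using i CT by (simp add: gen_a_def algebra_simps)
  ultimately show ?case by blast
qed

lemma Rp_S: "Rp b C T \<Longrightarrow> int (C * rb b n + a * T) \<in> S_sg a b n"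
proof (induction rule: Rp.induct)
  case Rp0 then show ?case unfolding S_sg_def by (simp add: semigroup_gen.zero)
next
  case (RpS C T e)
  have g: "int (gen_a a b n (Suc e)) \<in> {int (gen_a a b n i) | i. i \<ge> 1}" by auto
  have h: "int (gen_a a b n (Suc e)) + int (C * rb b n + a * T) \<in> S_sg a b n"
    using semigroup_gen.add[OF g] RpS.IH unfolding S_sg_def by blast
  have e: "int (Suc C * rb b n + a * (T + rb b e))
      = int (gen_a a b n (Suc e)) + int (C * rb b n + a * T)"
    by (simp add: gen_a_def algebra_simps)
  show ?case unfolding e by (rule h)
qed

lemma S_char:
  assumes b: "b \<ge> 2"
  shows "x \<in> S_sg a b n \<longleftrightarrow> (\<exists>C T. x = int (C * rb b n + a * T) \<and> ds b (C + (b - 1) * T) \<le> C)"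
proof
  assume "x \<in> S_sg a b n"
  then obtain C T where "Rp b C T" "x = int (C * rb b n + a * T)" using S_Rp by blast
  then show "\<exists>C T. x = int (C * rb b n + a * T) \<and> ds b (C + (b - 1) * T) \<le> C"
    using Rp_ds[OF b] by blast
next
  assume "\<exists>C T. x = int (C * rb b n + a * T) \<and> ds b (C + (b - 1) * T) \<le> C"
  then obtain C T where "x = int (C * rb b n + a * T)" "ds b (C + (b - 1) * T) \<le> C" by blast
  then show "x \<in> S_sg a b n" using ds_Rp[OF b] Rp_S by blast
qed

lemma gen_closure:
  assumes "\<forall>g\<in>G. x + g \<in> semigroup_gen G"
  shows "s \<in> semigroup_gen G \<Longrightarrow> s \<noteq> 0 \<Longrightarrow> x + s \<in> semigroup_gen G"
proof (induction rule: semigroup_gen.induct)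
  case zero then show ?case by simp
next
  case (add g s)
  show ?case
  proof (cases "s = 0")
    case True then show ?thesis using assms add.hyps(1) by simp
  next
    case False
    then have "x + s \<in> semigroup_gen G" using add.IH by simp
    then have "g + (x + s) \<in> semigroup_gen G" by (rule semigroup_gen.add[OF add.hyps(1)])
    then show ?thesis by (simp add: algebra_simps)
  qed
qed

lemma skew:
  assumes b: "b \<ge> 2"
  shows "T < rb b (Suc (Suc k)) \<Longrightarrow> \<exists>m d. 1 \<le> m \<and> m < Suc (Suc k) \<and>
     (\<forall>i. m < i \<longrightarrow> i < Suc (Suc k) \<longrightarrow> d i \<le> b - 1) \<and> d m \<le> b \<and>
     T = (\<Sum>i=m..<Suc (Suc k). d i * rb b i)"
proof (induction k arbitrary: T)
  case 0
  have "rb b 2 = 1 + b" by (simp add: rb_def numeral_2_eq_2)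
  then have "T \<le> b" using 0 by (simp add: numeral_2_eq_2)
  then show ?case
    by (intro exI[of _ 1] exI[of _ "\<lambda>i. T"]) (simp add: rb_def numeral_2_eq_2)
next
  case (Suc k)
  define N where "N = Suc (Suc k)"
  have rN: "rb b (Suc N) = b * rb b N + 1" by (rule rb_Suc)
  have rpos: "rb b N > 0" unfolding N_def using rb_ge[of b "Suc (Suc k)"] b by simp
  define q where "q = T div rb b N"
  define s where "s = T mod rb b N"
  have T: "T = q * rb b N + s" unfolding q_def s_def by (rule div_mult_mod_eq[symmetric])
  have slt: "s < rb b N" unfolding s_def using rpos by simp
  have "q * rb b N < b * rb b N + 1" using T Suc.prems unfolding N_def[symmetric] rN by linarith
  then have qb: "q \<le> b"
  proof -
    assume lt: "q * rb b N < b * rb b N + 1"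
    show "q \<le> b"
    proof (rule ccontr)
      assume "\<not> q \<le> b"
      then have "Suc b \<le> q" by simp
      then have "Suc b * rb b N \<le> q * rb b N" by (rule mult_le_mono1)
      then show False using lt rpos by simp
    qed
  qed
  show ?case
  proof (cases "q = b")
    case True
    have "s = 0"
    proof (rule ccontr)
      assume "s \<noteq> 0"
      then have "q * rb b N + s \<ge> b * rb b N + 1" using True by simp
      then show False using T Suc.prems unfolding N_def[symmetric] rN by linarith
    qed
    then have "T = (\<Sum>i=N..<Suc N. (\<lambda>i. b) i * rb b i)" using T True by simp
    then show ?thesis unfolding N_def[symmetric]
      by (intro exI[of _ N] exI[of _ "\<lambda>i. b"]) (auto simp: N_def)
  next
    case False
    then have qb1: "q \<le> b - 1" using qb by simp
    obtain m d where md: "1 \<le> m" "m < N" "\<forall>i. m < i \<longrightarrow> i < N \<longrightarrow> d i \<le> b - 1"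
      "d m \<le> b" "s = (\<Sum>i=m..<N. d i * rb b i)"
      using Suc.IH[OF slt[unfolded N_def]] unfolding N_def by blast
    define d' where "d' = d(N := q)"
    have "(\<Sum>i=m..<Suc N. d' i * rb b i) = (\<Sum>i=m..<N. d' i * rb b i) + d' N * rb b N"
      using md(2) by simp
    also have "(\<Sum>i=m..<N. d' i * rb b i) = (\<Sum>i=m..<N. d i * rb b i)"
      unfolding d'_def by (intro sum.cong) auto
    finally have "T = (\<Sum>i=m..<Suc N. d' i * rb b i)" using T md(5) by (simp add: d'_def)
    moreover have "\<forall>i. m < i \<longrightarrow> i < Suc N \<longrightarrow> d' i \<le> b - 1"
      using md(3) qb1 unfolding d'_def by (auto simp: less_Suc_eq)
    moreover have "d' m \<le> b" using md(4) md(2) unfolding d'_def by simp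
    ultimately show ?thesis unfolding N_def[symmetric] using md(1,2)
      by (intro exI[of _ m] exI[of _ d']) auto
  qed
qed

lemma sum_c:
  fixes b m n :: nat
  assumes b: "b \<ge> 1"
  shows "m < n \<Longrightarrow> (\<Sum>i=m..<n. (if i = m then b else b - 1)) = (n - m) * (b - 1) + 1"
proof (induction n)
  case 0 then show ?case by simp
next
  case (Suc n)
  show ?case
  proof (cases "m = n")
    case True then show ?thesis using b by simp
  next
    case False
    then have mn: "m < n" using Suc.prems by simp
    have "(\<Sum>i=m..<Suc n. (if i = m then b else b - 1)) = (\<Sum>i=m..<n. (if i = m then b else b - 1)) + (b - 1)"
      using mn by simp
    also have "\<dots> = (n - m) * (b - 1) + 1 + (b - 1)" using Suc.IH[OF mn] by simp
    also have "\<dots> = (Suc n - m) * (b - 1) + 1" using mn by (simp add: Suc_diff_le)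
    finally show ?thesis .
  qed
qed

lemma sum_cr:
  assumes b: "b \<ge> 1"
  shows "m < n \<Longrightarrow> (\<Sum>i=m..<n. (if i = m then b else b - 1) * rb b i) + (n - m) = rb b n"
proof (induction n)
  case 0 then show ?case by simp
next
  case (Suc n)
  show ?case
  proof (cases "m = n")
    case True then show ?thesis using b by (simp add: rb_Suc)
  next
    case False
    then have mn: "m < n" using Suc.prems by simp
    have "(\<Sum>i=m..<Suc n. (if i = m then b else b - 1) * rb b i) + (Suc n - m)
        = ((\<Sum>i=m..<n. (if i = m then b else b - 1) * rb b i) + (n - m)) + ((b - 1) * rb b n + 1)"
      using mn by (simp add: Suc_diff_le)
    also have "\<dots> = rb b n + b ^ n" using Suc.IH[OF mn] rb_mult[OF b, of n] by simp
    finally show ?thesis by (simp add: rb_Suc2)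
  qed
qed



definition XX :: "nat \<Rightarrow> nat \<Rightarrow> nat \<Rightarrow> nat \<Rightarrow> nat" where
  "XX a b n j = j * (b - 1) * rb b n + a * (rb b n - j)"

lemma ring_h: "(X::int) + r = (C1 + C2) * r + a * (T0 + T2) \<Longrightarrow> w = C1 * r + a * T0 \<Longrightarrow>
   w - y = r * k \<Longrightarrow> X - y = (C2 * r + a * T2) + r * (k - 1)"
  by (simp add: algebra_simps)

lemma hP1: "(Bm::int) * r + 1 = Bn \<Longrightarrow> (j*Bm + 1) + Bm*(r - j + Q) = Bn + Bm*Q"
proof -
  assume h: "Bm * r + 1 = Bn"
  have "(j*Bm + 1) + Bm*(r - j + Q) = (Bm*r + 1) + Bm*Q" by (simp add: algebra_simps)
  then show ?thesis using h by simp
qed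
lemma hP2: "(Bm::int) * Rq + 1 = Be \<Longrightarrow> (j*Bm + 1 + a) + Bm*(Rq - j) = a + Be"
proof -
  assume h: "Bm * Rq + 1 = Be"
  have "(j*Bm + 1 + a) + Bm*(Rq - j) = a + (Bm * Rq + 1)" by (simp add: algebra_simps)
  then show ?thesis using h by simp
qed
lemma hX1: "(X::int) = j*Bm*r + a*(r - j) \<Longrightarrow> G = r + a*Q \<Longrightarrow> X + G = (j*Bm + 1)*r + a*(r - j + Q)"
  by (simp add: algebra_simps)
lemma hX2: "(X::int) = j*Bm*r + a*(r - j) \<Longrightarrow> G = r + a*Q \<Longrightarrow> X + G = (j*Bm + 1 + a)*r + a*(Q - j)"
  by (simp add: algebra_simps)

context
  fixes a b n :: nat
  assumes apos: "a > 0" and b1: "b > 1" and n1: "n > 1" and cop: "coprime (rb b n) a"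
begin

lemma b2: "b \<ge> 2" using b1 by simp
lemma rge: "rb b n \<ge> n" using rb_ge b1 by simp
lemma hr: "(b - 1) * rb b n + 1 = b ^ n" using rb_mult b1 by simp
lemma hri: "int (b - 1) * int (rb b n) + 1 = int b ^ n"
  using arg_cong[OF hr, of int] by simp

lemma XXi: "j \<le> rb b n \<Longrightarrow> int (XX a b n j) = int j * int (b - 1) * int (rb b n) + int a * (int (rb b n) - int j)"
  unfolding XX_def by (simp add: of_nat_diff)

lemma notinS:
  assumes j1: "1 \<le> j" and jn: "j < n"
  shows "int (XX a b n j) \<notin> S_sg a b n"
proof
  assume "int (XX a b n j) \<in> S_sg a b n"
  then obtain C T where eq: "int (XX a b n j) = int (C * rb b n + a * T)"
    and dsl: "ds b (C + (b - 1) * T) \<le> C" using S_char[OF b2] by blast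
  define r where "r = rb b n"
  have jr: "j \<le> r" using jn rge unfolding r_def by simp
  have rpos: "r > 0" using rge n1 unfolding r_def by simp
  have eqi: "int C * int r + int a * int T = int j * int (b - 1) * int r + int a * (int r - int j)"
    using eq XXi[OF jr[unfolded r_def]] unfolding r_def by simp
  have "int a * (int T + int j - int r) = int r * (int j * int (b - 1) - int C)"
    using eqi by (simp add: algebra_simps)
  then have "int r dvd int a * (int T + int j - int r)" by simp
  moreover have "coprime (int r) (int a)" using cop unfolding r_def by simp
  ultimately have "int r dvd (int T + int j - int r)" using coprime_dvd_mult_right_iff by blast
  then obtain k where k: "int T + int j - int r = int r * k" by (auto elim: dvdE)
  have k0: "k \<ge> 0"
  proof (rule ccontr)
    assume "\<not> k \<ge> 0"
    then have "k \<le> -1" by simp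
    then have "int r * k \<le> int r * (-1)" using rpos by (intro mult_left_mono) auto
    then show False using k j1 by simp
  qed
  define m where "m = nat k"
  have km: "k = int m" unfolding m_def using k0 by simp
  have Tj: "int T = int r * (int m + 1) - int j" using k km by (simp add: algebra_simps)
  have "int r * (int C + int a * int m) = int r * (int j * int (b - 1))"
    using eqi Tj by (simp add: algebra_simps)
  then have "int C + int a * int m = int j * int (b - 1)" using rpos by simp
  then have Cm: "C + a * m = j * (b - 1)" by (simp flip: of_nat_mult of_nat_add)
  have "int (T + j) = int (r * (m + 1))" using Tj by (simp add: algebra_simps)
  then have Tj2: "T + j = r * (m + 1)" by (simp only: of_nat_eq_iff)
  have dd: "(b - 1) * (T + j) = (b - 1) * T + j * (b - 1)" by (simp only: distrib_left mult.commute[of j])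
  have "C + (b - 1) * T + a * m = (b - 1) * (T + j)" using Cm dd by linarith
  also have "\<dots> = ((b - 1) * r) * (m + 1)" unfolding Tj2 by (rule mult.assoc[symmetric])
  also have "(b - 1) * r = b ^ n - 1" using hr unfolding r_def by simp
  finally have Peq: "(b ^ n - 1) * (m + 1) = (C + (b - 1) * T) + a * m" by simp
  have "ds b ((b ^ n - 1) * (m + 1)) \<le> ds b (C + (b - 1) * T) + ds b (a * m)"
    unfolding Peq by (rule ds_add[OF b2])
  also have "\<dots> \<le> C + a * m" using dsl ds_le[OF b2, of "a * m"] by simp
  also have "\<dots> = j * (b - 1)" by (rule Cm)
  finally have up: "ds b ((b ^ n - 1) * (m + 1)) \<le> j * (b - 1)" .
  have "b ^ n > 1" using one_less_power[OF b1, of n] n1 by simp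
  then have "(b ^ n - 1) * (m + 1) > 0" by simp
  then have "ds b ((b ^ n - 1) * (m + 1)) \<ge> n * (b - 1)"
    using ds_multiple[OF b2, of n] n1 by simp
  moreover have "j * (b - 1) < n * (b - 1)" using jn b1 by simp
  ultimately show False using up by linarith
qed

lemma plus_gen:
  assumes j1: "1 \<le> j" and jn: "j < n" and i1: "i \<ge> 1"
  shows "int (XX a b n j) + int (gen_a a b n i) \<in> S_sg a b n"
proof -
  define r where "r = rb b n"
  define e where "e = i - 1"
  have jr: "j \<le> r" using jn rge unfolding r_def by simp
  have gi: "int (gen_a a b n i) = int r + int a * int (rb b e)"
    unfolding gen_a_def r_def e_def by simp
  have Xi: "int (XX a b n j) = int j * int (b - 1) * int r + int a * (int r - int j)"
    using XXi[OF jr[unfolded r_def]] unfolding r_def by simp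
  have hQ: "int (b - 1) * int (rb b e) + 1 = int b ^ e"
    using arg_cong[OF rb_mult[of b e], of int] b1 by simp
  have hri': "int (b - 1) * int r + 1 = int b ^ n" using hri unfolding r_def .
  show ?thesis
  proof (cases "e \<le> j")
    case True
    define C where "C = j * (b - 1) + 1"
    define T where "T = r - j + rb b e"
    have Ci: "int C = int j * int (b - 1) + 1" unfolding C_def by simp
    have Ti: "int T = int r - int j + int (rb b e)" unfolding T_def using jr by (simp add: of_nat_diff)
    have "int (XX a b n j) + int (gen_a a b n i) = int C * int r + int a * int T"
      unfolding Ci Ti by (rule hX1[OF Xi gi])
    then have x: "int (XX a b n j) + int (gen_a a b n i) = int (C * rb b n + a * T)"
      unfolding r_def by simp
    have "int (C + (b - 1) * T) = int (b - 1) * int (rb b e) + int b ^ n"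
      unfolding of_nat_add of_nat_mult Ci Ti using hP1[OF hri'] by (simp add: algebra_simps)
    also have "\<dots> = int (b ^ n + (b - 1) * rb b e)" by simp
    finally have P: "C + (b - 1) * T = b ^ n + (b - 1) * rb b e" by (simp only: of_nat_eq_iff)
    have "(b - 1) * rb b e = b ^ e - 1" using rb_mult[of b e] b1 by simp
    then have dQ: "ds b ((b - 1) * rb b e) = e * (b - 1)" using ds_pm1[OF b2] by simp
    have "ds b (C + (b - 1) * T) \<le> ds b (b ^ n) + ds b ((b - 1) * rb b e)"
      unfolding P by (rule ds_add[OF b2])
    also have "\<dots> = 1 + e * (b - 1)" using ds_pow[OF b2] dQ by simp
    also have "\<dots> \<le> C" unfolding C_def using True by simp
    finally show ?thesis using x S_char[OF b2] by blast
  next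
    case False
    have ej: "j \<le> rb b e" using rb_ge[of b e] b1 False by simp
    define C where "C = j * (b - 1) + 1 + a"
    define T where "T = rb b e - j"
    have Ci: "int C = int j * int (b - 1) + 1 + int a" unfolding C_def by simp
    have Ti: "int T = int (rb b e) - int j" unfolding T_def using ej by (simp add: of_nat_diff)
    have "int (XX a b n j) + int (gen_a a b n i) = int C * int r + int a * int T"
      unfolding Ci Ti by (rule hX2[OF Xi gi])
    then have x: "int (XX a b n j) + int (gen_a a b n i) = int (C * rb b n + a * T)"
      unfolding r_def by simp
    have "int (C + (b - 1) * T) = int a + int b ^ e"
      unfolding of_nat_add of_nat_mult Ci Ti using hP2[OF hQ] by (simp add: algebra_simps)
    also have "\<dots> = int (a + b ^ e)" by simp
    finally have P: "C + (b - 1) * T = a + b ^ e" by (simp only: of_nat_eq_iff)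
    have "ds b (C + (b - 1) * T) \<le> ds b a + ds b (b ^ e)"
      unfolding P by (rule ds_add[OF b2])
    also have "\<dots> \<le> a + 1" using ds_pow[OF b2] ds_le[OF b2, of a] by simp
    also have "\<dots> \<le> C" unfolding C_def by simp
    finally show ?thesis using x S_char[OF b2] by blast
  qed
qed

lemma gap:
  assumes y: "y \<notin> S_sg a b n"
  shows "\<exists>j. 1 \<le> j \<and> j < n \<and> int (XX a b n j) - y \<in> S_sg a b n"
proof -
  define r where "r = rb b n"
  have rpos: "r > 0" using rge n1 unfolding r_def by simp
  have "coprime (int a) (int r)" using cop unfolding r_def by (simp add: coprime_commute)
  then have g1: "gcd (int a) (int r) = 1" by simp
  obtain u v where uv: "u * int a + v * int r = 1" using bezout_int[of "int a" "int r"] g1 by auto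
  define T0i where "T0i = (y * u) mod int r"
  have T0nn: "T0i \<ge> 0" "T0i < int r" using rpos by (simp_all add: T0i_def)
  define T0 where "T0 = nat T0i"
  have T0i': "int T0 = T0i" using T0nn by (simp add: T0_def)
  have T0lt: "T0 < r" using T0nn T0i' by linarith
  have dvd1: "int r dvd (int a * int T0 - y)"
  proof -
    define q where "q = y * u div int r"
    have yu: "y * u = int r * q + T0i" unfolding q_def T0i_def by (rule mult_div_mod_eq[symmetric])
    have "int a * int T0 - y = int a * (y * u - int r * q) - y" using yu T0i' by simp
    also have "\<dots> = y * (u * int a) - y - int r * (int a * q)" by (simp add: algebra_simps)
    also have "\<dots> = y * (1 - v * int r) - y - int r * (int a * q)"
    proof -
      have ua: "u * int a = 1 - v * int r" using uv by simp
      show ?thesis by (simp only: ua)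
    qed
    also have "\<dots> = int r * (- y * v - int a * q)" by (simp add: algebra_simps)
    finally show ?thesis by simp
  qed
  define kk where "kk = n - 2"
  have nk: "n = Suc (Suc kk)" using n1 unfolding kk_def by simp
  have T0lt': "T0 < rb b (Suc (Suc kk))" using T0lt unfolding r_def nk .
  obtain m d where md: "1 \<le> m" "m < n" "\<forall>i. m < i \<longrightarrow> i < n \<longrightarrow> d i \<le> b - 1" "d m \<le> b"
      "T0 = (\<Sum>i=m..<n. d i * rb b i)"
    using skew[OF b2 T0lt'] unfolding nk[symmetric] by blast
  define c where "c i = (if i = m then b else b - 1)" for i
  define dd where "dd i = c i - d i" for i
  have dle: "\<And>i. i \<in> {m..<n} \<Longrightarrow> d i \<le> c i" using md(3,4) unfolding c_def by force
  define C1 where "C1 = (\<Sum>i=m..<n. d i)"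
  define C2 where "C2 = (\<Sum>i=m..<n. dd i)"
  define T2 where "T2 = (\<Sum>i=m..<n. dd i * rb b i)"
  have R1: "Rp b C1 T0" unfolding C1_def md(5) by (rule Rp_sum) simp
  have R2: "Rp b C2 T2" unfolding C2_def T2_def by (rule Rp_sum) simp
  have "C1 + C2 = (\<Sum>i=m..<n. c i)"
    unfolding C1_def C2_def sum.distrib[symmetric] by (rule sum.cong) (auto simp: dd_def dle)
  also have "\<dots> = (n - m) * (b - 1) + 1" unfolding c_def using sum_c[of b m n] b1 md(2) by simp
  finally have sC: "C1 + C2 = (n - m) * (b - 1) + 1" .
  have "T0 + T2 = (\<Sum>i=m..<n. c i * rb b i)"
    unfolding md(5) T2_def sum.distrib[symmetric]
  proof (rule sum.cong)
    fix i assume "i \<in> {m..<n}"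
    then have "d i + dd i = c i" using dle unfolding dd_def by simp
    then show "d i * rb b i + dd i * rb b i = c i * rb b i" by (simp flip: add_mult_distrib)
  qed simp
  then have sT: "T0 + T2 + (n - m) = r" unfolding c_def r_def using sum_cr[of b m n] b1 md(2) by simp
  define j where "j = n - m"
  have j: "1 \<le> j" "j < n" using md(1,2) unfolding j_def by auto
  have jr: "j \<le> r" using j rge unfolding r_def by simp
  define w where "w = int (C1 * r + a * T0)"
  have wS: "w \<in> S_sg a b n" using Rp_S[OF R1] unfolding w_def r_def .
  have "int r dvd (int C1 * int r + (int a * int T0 - y))" by (rule dvd_add[OF dvd_triv_right dvd1])
  moreover have "w - y = int C1 * int r + (int a * int T0 - y)" unfolding w_def by simp
  ultimately have "int r dvd (w - y)" by (simp only:)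
  then obtain k where wk: "w - y = int r * k" by (auto elim: dvdE)
  show ?thesis
  proof (cases "k \<le> 0")
    case True
    define t where "t = nat (- k)"
    have "y = w + int r * int t" using wk True unfolding t_def by (simp add: algebra_simps)
    then have "y = int ((C1 + t) * rb b n + a * (T0 + t * rb b 0))"
      unfolding w_def r_def by (simp add: algebra_simps)
    moreover have "int ((C1 + t) * rb b n + a * (T0 + t * rb b 0)) \<in> S_sg a b n"
      by (rule Rp_S[OF Rp_add[OF R1 Rp_rep]])
    ultimately have "y \<in> S_sg a b n" by simp
    then show ?thesis using y by simp
  next
    case False
    define t where "t = nat (k - 1)"
    have ti: "int t = k - 1" using False unfolding t_def by simp
    have Ci: "int C1 + int C2 = int j * int (b - 1) + 1" using arg_cong[OF sC, of int] unfolding j_def by simp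
    have Ti: "int T0 + int T2 = int r - int j" using arg_cong[OF sT, of int] unfolding j_def by simp
    have Xi: "int (XX a b n j) = int j * int (b - 1) * int r + int a * (int r - int j)"
      using XXi[OF jr[unfolded r_def]] unfolding r_def by simp
    have "int (XX a b n j) + int r = (int C1 + int C2) * int r + int a * (int T0 + int T2)"
      unfolding Ci Ti Xi by (simp add: algebra_simps)
    then have "int (XX a b n j) - y = (int C2 * int r + int a * int T2) + int r * (k - 1)"
      by (rule ring_h) (use w_def wk in simp_all)
    then have "int (XX a b n j) - y = (int C2 * int r + int a * int T2) + int r * int t"
      unfolding ti .
    then have "int (XX a b n j) - y = int ((C2 + t) * rb b n + a * (T2 + t * rb b 0))"
      unfolding r_def by (simp add: algebra_simps)
    moreover have "int ((C2 + t) * rb b n + a * (T2 + t * rb b 0)) \<in> S_sg a b n"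
      by (rule Rp_S[OF Rp_add[OF R2 Rp_rep]])
    ultimately have "int (XX a b n j) - y \<in> S_sg a b n" by simp
    then show ?thesis using j by blast
  qed
qed

lemma fX:
  assumes i: "2 \<le> i" "i \<le> n"
  shows "(int n - int i + 1) * (int b ^ n - 1 - int a) + int a * int (rb b n) = int (XX a b n (n - i + 1))"
proof -
  define j where "j = n - i + 1"
  have jr: "j \<le> rb b n" using i rge unfolding j_def by simp
  have ji: "int j = int n - int i + 1" using i unfolding j_def by (simp add: of_nat_diff)
  show ?thesis unfolding j_def[symmetric] XXi[OF jr] ji[symmetric] hri[symmetric]
    by (simp add: algebra_simps)
qed

lemma Kne: "int b ^ n - 1 - int a \<noteq> 0"
proof
  assume "int b ^ n - 1 - int a = 0"
  then have "int a = int ((b - 1) * rb b n)" using hri by simp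
  then have "a = (b - 1) * rb b n" by (simp only: of_nat_eq_iff)
  then have "coprime (rb b n) (rb b n)" using cop by simp
  then have "rb b n = 1" by simp
  then show False using rge n1 by simp
qed

end

theorem corollary30:
  fixes a b n :: nat
  assumes "a > 0" and "b > 1" and "n > 1" and "coprime (rb b n) a"
  shows "PF (S_sg a b n) =
           (\<lambda>i. (int n - int i + 1) * (int b ^ n - 1 - int a) + int a * int (rb b n)) ` {2..n}
         \<and> sg_type (S_sg a b n) = n - 1"
proof -
  define f where "f = (\<lambda>i. (int n - int i + 1) * (int b ^ n - 1 - int a) + int a * int (rb b n))"
  define S where "S = S_sg a b n"
  have PFeq: "PF S = f ` {2..n}"
  proof
    show "PF S \<subseteq> f ` {2..n}"
    proof
      fix y assume "y \<in> PF S"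
      then have yS: "y \<notin> S" and yP: "\<forall>s\<in>S - {0}. y + s \<in> S" by (auto simp: PF_def)
      obtain j where j: "1 \<le> j" "j < n" "int (XX a b n j) - y \<in> S"
        using gap[OF assms yS[unfolded S_def]] unfolding S_def by blast
      define i where "i = n - j + 1"
      have i: "i \<in> {2..n}" and ji: "n - i + 1 = j" using j by (auto simp: i_def)
      have fi: "f i = int (XX a b n j)" using fX[OF assms, of i] i ji unfolding f_def by simp
      show "y \<in> f ` {2..n}"
      proof (cases "int (XX a b n j) - y = 0")
        case True then have "y = f i" using fi by simp
        then show ?thesis using i by blast
      next
        case False
        then have "y + (int (XX a b n j) - y) \<in> S" using yP j(3) by blast
        then have "int (XX a b n j) \<in> S" by simp
        then show ?thesis using notinS[OF assms j(1,2)] unfolding S_def by simp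
      qed
    qed
  next
    show "f ` {2..n} \<subseteq> PF S"
    proof
      fix x assume "x \<in> f ` {2..n}"
      then obtain i where i: "i \<in> {2..n}" "x = f i" by blast
      define j where "j = n - i + 1"
      have j: "1 \<le> j" "j < n" using i by (auto simp: j_def)
      have x: "x = int (XX a b n j)" using fX[OF assms, of i] i unfolding j_def f_def by simp
      have "\<forall>g\<in>{int (gen_a a b n i) |i. 1 \<le> i}. x + g \<in> semigroup_gen {int (gen_a a b n i) |i. 1 \<le> i}"
        using plus_gen[OF assms j] x unfolding S_sg_def by blast
      then have "\<forall>s\<in>S - {0}. x + s \<in> S" using gen_closure unfolding S_def S_sg_def by blast
      moreover have "x \<notin> S" using notinS[OF assms j] x unfolding S_def by simp
      ultimately show "x \<in> PF S" by (simp add: PF_def)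
    qed
  qed
  have "inj_on f {2..n}"
  proof (rule inj_onI)
    fix i1 i2 assume "i1 \<in> {2..n}" "i2 \<in> {2..n}" "f i1 = f i2"
    then have "(int n - int i1 + 1) * (int b ^ n - 1 - int a) = (int n - int i2 + 1) * (int b ^ n - 1 - int a)"
      unfolding f_def by simp
    then have "int n - int i1 + 1 = int n - int i2 + 1" using Kne[OF assms] by simp
    then show "i1 = i2" by simp
  qed
  then have "card (f ` {2..n}) = n - 1" by (simp add: card_image)
  then show ?thesis using PFeq unfolding sg_type_def S_def f_def by simp
qed


end
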